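(* Let $\mathbb G=V_1\times V_2$ be a step-two Carnot group with $\dim V_2=3$. Then $\mathcal A(V_1\times V_2)\subsetneq\mathcal A_h(\mathbb G)$ if and only if $\mathbb G$ is isomorphic to the direct product $\mathbb F_3\times\mathbb R^d$ for some integer $d\geq0$.
   Context: A step-two Carnot group is $\mathbb G=V_1\times V_2$ ($V_1,V_2$ finite-dimensional real vector spaces, $V_2\ne\{0\}$) with a bilinear skew-symmetric $[\cdot,\cdot]:V_1\times V_1\to V_2$ whose image spans $V_2$, and group law $(x,z)\cdot(x',z')=(x+x',z+z'+[x,x'])$. $\mathcal A_h(\mathbb G)$ is the space of maps $f:\mathbb G\to\mathbb R$ such that for all $(x,z)\in\mathbb G$, $y\in V_1$, $t\mapsto f((x,z)\cdot(ty,0))$ is affine; $\mathcal A(V_1\times V_2)$ is the space of maps affine in the usual sense. $\mathbb F_3=\Lambda^1(\mathbb R^3)\times\Lambda^2(\mathbb R^3)$ with bracket $[\theta,\theta']=\theta\wedge\theta'$; $\mathbb F_3\times\mathbb R^d$ is $(\Lambda^1(\mathbb R^3)\oplus\mathbb R^d)\times\Lambda^2(\mathbb R^3)$ with bracket $[\theta+u,\theta'+u']:=\theta\wedge\theta'$. Two step-two Carnot groups are isomorphic if there is a bijective Carnot morphism between them, where a Carnot morphism is $\pi(x,z)=(\pi_1(x),\pi_2(z))$ with $\pi_1,\pi_2$ linear and $\pi_2([x,y])=[\pi_1(x),\pi_1(y)]'$. *)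

theory Defs
  imports "HOL-Analysis.Analysis"
begin

(* A step-two Carnot group G = V1 x V2 is given by the bracket br : V1 x V1 -> V2.
   V1 = 'a, V2 = 'b are finite-dimensional real vector spaces (euclidean_space types). *)
definition step2_carnot :: "('a::euclidean_space \<Rightarrow> 'a \<Rightarrow> 'b::euclidean_space) \<Rightarrow> bool" where
  "step2_carnot br \<longleftrightarrow> bilinear br \<and> (\<forall>x y. br x y = - br y x)
     \<and> span (range (\<lambda>(x, y). br x y)) = UNIV \<and> (UNIV :: 'b set) \<noteq> {0}"

definition cmult :: "('a::euclidean_space \<Rightarrow> 'a \<Rightarrow> 'b::euclidean_space) \<Rightarrow> 'a \<times> 'b \<Rightarrow> 'a \<times> 'b \<Rightarrow> 'a \<times> 'b" where
  "cmult br p q = (fst p + fst q, snd p + snd q + br (fst p) (fst q))"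

definition horiz_affine :: "('a::euclidean_space \<Rightarrow> 'a \<Rightarrow> 'b::euclidean_space) \<Rightarrow> ('a \<times> 'b \<Rightarrow> real) \<Rightarrow> bool" where
  "horiz_affine br f \<longleftrightarrow>
     (\<forall>p y. \<exists>a b. \<forall>t::real. f (cmult br p (t *\<^sub>R y, 0)) = a * t + b)"

definition affine_map :: "('v::real_vector \<Rightarrow> real) \<Rightarrow> bool" where
  "affine_map f \<longleftrightarrow> (\<exists>g c. linear g \<and> (\<forall>v. f v = g v + c))"

(* Wedge product of two 1-forms on R^3 (coordinates w.r.t. e1,e2,e3), with values in
   Lambda^2(R^3), coordinates w.r.t. the basis e1/\e2, e1/\e3, e2/\e3 (indices 1,2,3). *)
definition wedge3 :: "real^3 \<Rightarrow> real^3 \<Rightarrow> real^3" where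
  "wedge3 a b = vector [a$1 * b$2 - a$2 * b$1, a$1 * b$3 - a$3 * b$1, a$2 * b$3 - a$3 * b$2]"

(* Underlying first layer of F_3 x R^d: Lambda^1(R^3) (+) R^d, with R^d realised as
   the functions nat \<Rightarrow> real supported in {..<d}. *)
definition F3Rd_V1 :: "nat \<Rightarrow> ((real^3) \<times> (nat \<Rightarrow> real)) set" where
  "F3Rd_V1 d = {(\<theta>, u). \<forall>i\<ge>d. u i = 0}"

(* G is isomorphic (via a bijective Carnot morphism pi = (pi1, pi2)) to F_3 x R^d.
   pi1 : V1 -> Lambda^1(R^3) (+) R^d is x \<mapsto> (\<theta> x, (l_i x)_{i<d}), linear means that
   \<theta> and every coordinate functional l_i are linear; pi2 : V2 -> Lambda^2(R^3). The
   bracket of F_3 x R^d is [\<theta>+u, \<theta>'+u'] = \<theta> /\ \<theta>'. *)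
definition iso_F3Rd :: "('a::euclidean_space \<Rightarrow> 'a \<Rightarrow> 'b::euclidean_space) \<Rightarrow> nat \<Rightarrow> bool" where
  "iso_F3Rd br d \<longleftrightarrow>
     (\<exists>(\<theta> :: 'a \<Rightarrow> (real^3)) (l :: nat \<Rightarrow> 'a \<Rightarrow> real) (\<pi>2 :: 'b \<Rightarrow> real^3).
        linear \<theta> \<and> (\<forall>i<d. linear (l i)) \<and> linear \<pi>2 \<and>
        bij_betw (\<lambda>x. (\<theta> x, \<lambda>i. if i < d then l i x else 0)) UNIV (F3Rd_V1 d) \<and>
        bij \<pi>2 \<and>
        (\<forall>x y. \<pi>2 (br x y) = wedge3 (\<theta> x) (\<theta> y)))"

end

theory Submission
  imports Defs
begin


definition aff :: "(real \<Rightarrow> real) \<Rightarrow> bool" where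
  "aff g \<longleftrightarrow> (\<exists>m c. \<forall>t. g t = m * t + c)"

lemma aff_iff: "aff g \<longleftrightarrow> (\<forall>t. g t = g 0 + t * (g 1 - g 0))"
proof
  assume "aff g"
  then obtain m c where h: "\<And>t. g t = m * t + c" unfolding aff_def by blast
  show "\<forall>t. g t = g 0 + t * (g 1 - g 0)" by (simp add: h algebra_simps)
next
  assume h: "\<forall>t. g t = g 0 + t * (g 1 - g 0)"
  show "aff g" unfolding aff_def
  proof (intro exI allI)
    fix t
    have "g t = g 0 + t * (g 1 - g 0)" using h by blast
    then show "g t = (g 1 - g 0) * t + g 0" by (simp add: algebra_simps)
  qed
qed

lemma affD: "aff g \<Longrightarrow> g t = g 0 + t * (g 1 - g 0)"
  using aff_iff by blast

lemma affI: "(\<And>t. g t = m * t + c) \<Longrightarrow> aff g"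
  unfolding aff_def by blast

lemma aff_comb: "aff g \<Longrightarrow> aff h \<Longrightarrow> aff (\<lambda>t. a * g t + b * h t + c)"
proof -
  assume "aff g" "aff h"
  then obtain m1 c1 m2 c2 where "\<forall>t. g t = m1 * t + c1" "\<forall>t. h t = m2 * t + c2"
    unfolding aff_def by blast
  then show ?thesis
    by (intro affI[where m="a*m1+b*m2" and c="a*c1+b*c2+c"]) (simp add: algebra_simps)
qed

lemma aff_quad: assumes "aff (\<lambda>t. A + B * t + C * t^2)" shows "C = 0"
proof -
  from affD[OF assms, of "-1"] show ?thesis by (simp add: algebra_simps power2_eq_square)
qed

lemma aff_cubic: assumes "aff (\<lambda>t. A + B * t + C * t^2 + D * t^3)" shows "C = 0 \<and> D = 0"
proof -
  have e1: "A - B + C - D = A + (- 1) * (A + B + C + D - A)"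
    using affD[OF assms, of "-1"] by (simp add: power2_eq_square power3_eq_cube)
  have e2: "A + 2*B + 4*C + 8*D = A + 2 * (A + B + C + D - A)"
    using affD[OF assms, of "2"] by (simp add: power2_eq_square power3_eq_cube)
  from e1 have "C = 0" by (simp add: algebra_simps)
  with e2 show ?thesis by (simp add: algebra_simps)
qed

lemma grid:
  assumes "\<And>a. aff (\<lambda>l. F a l)" "aff (\<lambda>a. F a 0)" "aff (\<lambda>a. F a 1)"
  shows "aff (\<lambda>a. F a l)"
proof -
  have "\<And>a. F a l = (1 - l) * F a 0 + l * F a 1 + 0"
    using affD[OF assms(1)] by (simp add: algebra_simps)
  then have "(\<lambda>a. F a l) = (\<lambda>a. (1 - l) * F a 0 + l * F a 1 + 0)" by auto
  then show ?thesis using aff_comb[OF assms(2,3), of "1 - l" l 0] by simp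
qed

definition gd :: "('v::real_vector \<Rightarrow> real) \<Rightarrow> 'v \<Rightarrow> bool" where
  "gd f d \<longleftrightarrow> (\<forall>p. aff (\<lambda>t. f (p + t *\<^sub>R d)))"

lemma plane_formula:
  fixes f :: "'v::real_vector \<Rightarrow> real"
  assumes u: "gd f u" and v: "gd f v" and uv: "gd f (u + v)"
  shows "f (p + s *\<^sub>R u + t *\<^sub>R v) = f p + s * (f (p + u) - f p) + t * (f (p + v) - f p)"
proof -
  define g where "g s t = f (p + s *\<^sub>R u + t *\<^sub>R v)" for s t
  have gs: "g s t = g 0 t + s * (g 1 t - g 0 t)" for s t
  proof -
    have "aff (\<lambda>s. f ((p + t *\<^sub>R v) + s *\<^sub>R u))" using u unfolding gd_def by blast
    from affD[OF this, of s] show ?thesis unfolding g_def by (simp add: add.assoc add.commute add.left_commute)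
  qed
  have gt: "g a t = g a 0 + t * (g a 1 - g a 0)" for a t
  proof -
    have "aff (\<lambda>t. f ((p + a *\<^sub>R u) + t *\<^sub>R v))" using v unfolding gd_def by blast
    from affD[OF this, of t] show ?thesis unfolding g_def by simp
  qed
  define D where "D = g 1 1 - g 1 0 - g 0 1 + g 0 0"
  have diag: "g r r = g 0 0 + (g 1 0 - g 0 0 + g 0 1 - g 0 0) * r + D * r^2" for r
    using gs[of r r] gt[of 0 r] gt[of 1 r] unfolding D_def
    by (simp add: algebra_simps power2_eq_square)
  have "aff (\<lambda>r. f (p + r *\<^sub>R (u + v)))" using uv unfolding gd_def by blast
  moreover have "(\<lambda>r. f (p + r *\<^sub>R (u + v))) = (\<lambda>r. g r r)"
    unfolding g_def by (simp add: scaleR_right_distrib add.assoc)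
  moreover have "(\<lambda>r. g r r) = (\<lambda>r. g 0 0 + (g 1 0 - g 0 0 + g 0 1 - g 0 0) * r + D * r^2)"
    by (rule ext) (rule diag)
  ultimately have "aff (\<lambda>r. g 0 0 + (g 1 0 - g 0 0 + g 0 1 - g 0 0) * r + D * r^2)"
    by simp
  then have D0: "D = 0" by (rule aff_quad)
  have h11: "g 1 1 = g 1 0 + g 0 1 - g 0 0" using D0 unfolding D_def by simp
  have e1: "g 0 t = g 0 0 + t * (g 0 1 - g 0 0)" by (rule gt)
  have e2: "g 1 t = g 1 0 + t * (g 0 1 - g 0 0)" using gt[of 1 t] h11 by simp
  have "g s t = g 0 0 + s * (g 1 0 - g 0 0) + t * (g 0 1 - g 0 0)"
    unfolding gs[of s t] e1 e2 by (simp add: algebra_simps)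
  then show ?thesis unfolding g_def by simp
qed

lemma gd_plane:
  fixes f :: "'v::real_vector \<Rightarrow> real"
  assumes u: "gd f u" and v: "gd f v" and uv: "gd f (u + v)"
  shows "gd f (a *\<^sub>R u + b *\<^sub>R v)"
  unfolding gd_def
proof
  fix p
  have "f (p + t *\<^sub>R (a *\<^sub>R u + b *\<^sub>R v)) = (a * (f (p + u) - f p) + b * (f (p + v) - f p)) * t + f p" for t
  proof -
    have "p + t *\<^sub>R (a *\<^sub>R u + b *\<^sub>R v) = p + (t*a) *\<^sub>R u + (t*b) *\<^sub>R v"
      by (simp add: scaleR_right_distrib add.assoc)
    then show ?thesis using plane_formula[OF u v uv, of p "t*a" "t*b"] by (simp add: algebra_simps)
  qed
  then show "aff (\<lambda>t. f (p + t *\<^sub>R (a *\<^sub>R u + b *\<^sub>R v)))" by (rule affI)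
qed

lemma linear_from_gd:
  fixes g :: "'v::real_vector \<Rightarrow> real"
  assumes "\<And>d. gd g d"
  shows "linear (\<lambda>x. g x - g 0)"
proof (rule linearI)
  fix x y
  show "g (x + y) - g 0 = g x - g 0 + (g y - g 0)"
    using plane_formula[OF assms assms assms, of 0 1 x 1 y] by simp
next
  fix r x
  have "aff (\<lambda>t. g (0 + t *\<^sub>R x))" using assms unfolding gd_def by blast
  from affD[OF this, of r] show "g (r *\<^sub>R x) - g 0 = r *\<^sub>R (g x - g 0)" by simp
qed



lemma br_self:
  assumes "\<forall>x y. br x y = - br y x"
  shows "br x x = (0::'b::real_vector)"
proof -
  have "br x x = - br x x" using assms by blast
  then have "2 *\<^sub>R br x x = 0" by (simp add: scaleR_2 eq_neg_iff_add_eq_0)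
  then show ?thesis by simp
qed

lemma scaleR_add_same: "a *\<^sub>R v + a *\<^sub>R v = (a + a) *\<^sub>R (v::'a::real_vector)"
  by (rule scaleR_left_distrib[symmetric])

lemma hline:
  fixes br :: "'a::euclidean_space \<Rightarrow> 'a \<Rightarrow> 'b::euclidean_space"
  assumes bl: "bilinear br" and h: "horiz_affine br f"
  shows "aff (\<lambda>t. f (x + t *\<^sub>R y, z + t *\<^sub>R br x y))"
proof -
  obtain a b where ab: "\<forall>t. f (cmult br (x, z) (t *\<^sub>R y, 0)) = a * t + b"
    using h unfolding horiz_affine_def by blast
  have "cmult br (x, z) (t *\<^sub>R y, 0) = (x + t *\<^sub>R y, z + t *\<^sub>R br x y)" for t
    unfolding cmult_def by (simp add: bilinear_rmul[OF bl])
  with ab show ?thesis unfolding aff_def by (metis mult.commute)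
qed

lemma regulus:
  fixes br :: "'a::euclidean_space \<Rightarrow> 'a \<Rightarrow> 'b::euclidean_space"
  assumes bl: "bilinear br" and as: "\<forall>x y. br x y = - br y x" and h: "horiz_affine br f"
  shows "aff (\<lambda>t. f (X + t *\<^sub>R Y, Z + t *\<^sub>R br Y W))"
proof -
  define x where "x = (1/4) *\<^sub>R (X - 3 *\<^sub>R W)"
  define x' where "x' = - ((1/2) *\<^sub>R (X + 3 *\<^sub>R W))"
  define y where "y = (1/3) *\<^sub>R Y"
  define z where "z = Z + br x x'"
  define F where "F a l = f (x + a *\<^sub>R y + l *\<^sub>R (x' - x - a *\<^sub>R y - a *\<^sub>R y),
       z + a *\<^sub>R br x y + l *\<^sub>R (br x x' - a *\<^sub>R br x y - a *\<^sub>R br x' y))" for a l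
  have key: "br (x + a *\<^sub>R y) (x' - x - a *\<^sub>R y - a *\<^sub>R y) = br x x' - a *\<^sub>R br x y - a *\<^sub>R br x' y" for a
  proof -
    have "br (x + a *\<^sub>R y) (x' - x - a *\<^sub>R y - a *\<^sub>R y)
       = br x x' - br x x - a *\<^sub>R br x y - a *\<^sub>R br x y + a *\<^sub>R br y x' - a *\<^sub>R br y x - (a * a) *\<^sub>R br y y - (a * a) *\<^sub>R br y y"
      by (simp only: bilinear_ladd[OF bl] bilinear_rsub[OF bl] bilinear_lmul[OF bl] bilinear_rmul[OF bl] scaleR_diff_right scaleR_scaleR) (simp add: algebra_simps)
    also have "\<dots> = br x x' - a *\<^sub>R br x y - a *\<^sub>R br x y - a *\<^sub>R br x' y + a *\<^sub>R br x y"
      using as[rule_format, of y x'] as[rule_format, of y x] br_self[OF as, of x] br_self[OF as, of y]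
      by (simp add: algebra_simps)
    finally show ?thesis by (simp add: algebra_simps)
  qed
  have A1: "aff (\<lambda>l. F a l)" for a
  proof -
    have "aff (\<lambda>l. f ((x + a *\<^sub>R y) + l *\<^sub>R (x' - x - a *\<^sub>R y - a *\<^sub>R y),
              (z + a *\<^sub>R br x y) + l *\<^sub>R br (x + a *\<^sub>R y) (x' - x - a *\<^sub>R y - a *\<^sub>R y)))"
      by (rule hline[OF bl h])
    then show ?thesis unfolding F_def key .
  qed
  have A0: "aff (\<lambda>a. F a 0)"
    unfolding F_def using hline[OF bl h, of x y z] by simp
  have "F a 1 = f (x' + a *\<^sub>R (- y), (z + br x x') + a *\<^sub>R br x' (- y))" for a
  proof -
    have h1: "x + a *\<^sub>R y + 1 *\<^sub>R (x' - x - a *\<^sub>R y - a *\<^sub>R y) = x' + a *\<^sub>R (- y)"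
      by (simp add: algebra_simps)
    have h2: "z + a *\<^sub>R br x y + 1 *\<^sub>R (br x x' - a *\<^sub>R br x y - a *\<^sub>R br x' y) = (z + br x x') + a *\<^sub>R br x' (- y)"
      by (simp add: bilinear_rneg[OF bl] algebra_simps)
    show ?thesis unfolding F_def h1 h2 by (rule refl)
  qed
  then have A2: "aff (\<lambda>a. F a 1)"
    using hline[OF bl h, of x' "- y" "z + br x x'"] by simp
  have G: "aff (\<lambda>a. F a (-1))" by (rule grid[OF A1 A0 A2])
  have e1: "x + x - x' = X" unfolding x_def x'_def by (simp add: algebra_simps scaleR_add_same)
  have e2: "2 *\<^sub>R x + x' = - (3 *\<^sub>R W)" unfolding x_def x'_def by (simp add: algebra_simps scaleR_add_same)
  have e3: "br x y + br x y + br x' y = br Y W"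
  proof -
    have "br x y + br x y + br x' y = br (2 *\<^sub>R x + x') y"
      by (simp add: bilinear_ladd[OF bl] bilinear_lmul[OF bl] scaleR_2)
    also have "\<dots> = br (- (3 *\<^sub>R W)) ((1/3) *\<^sub>R Y)" unfolding e2 y_def ..
    also have "\<dots> = - br W Y"
      by (simp add: bilinear_lneg[OF bl] bilinear_lmul[OF bl] bilinear_rmul[OF bl])
    also have "\<dots> = br Y W" using as[rule_format, of W Y] by simp
    finally show ?thesis .
  qed
  have "F a (-1) = f (X + a *\<^sub>R Y, Z + a *\<^sub>R br Y W)" for a
  proof -
    have y3: "y + y + y = Y"
    proof -
      have "y + y + y = (1/3 + 1/3 + 1/3) *\<^sub>R Y" unfolding y_def by (simp only: scaleR_left_distrib)
      then show ?thesis by simp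
    qed
    have "x + a *\<^sub>R y + (-1) *\<^sub>R (x' - x - a *\<^sub>R y - a *\<^sub>R y) = (x + x - x') + a *\<^sub>R (y + y + y)"
      by (simp add: algebra_simps)
    also have "\<dots> = X + a *\<^sub>R Y" unfolding e1 y3 by simp
    finally have 1: "x + a *\<^sub>R y + (-1) *\<^sub>R (x' - x - a *\<^sub>R y - a *\<^sub>R y) = X + a *\<^sub>R Y" .
    have "z + a *\<^sub>R br x y + (-1) *\<^sub>R (br x x' - a *\<^sub>R br x y - a *\<^sub>R br x' y)
        = (z - br x x') + a *\<^sub>R (br x y + br x y + br x' y)"
      by (simp add: algebra_simps)
    also have "\<dots> = Z + a *\<^sub>R br Y W" unfolding e3 z_def by simp
    finally have 2: "z + a *\<^sub>R br x y + (-1) *\<^sub>R (br x x' - a *\<^sub>R br x y - a *\<^sub>R br x' y) = Z + a *\<^sub>R br Y W" .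
    show ?thesis unfolding F_def 1 2 ..
  qed
  then show ?thesis using G by simp
qed

lemma gdE:
  fixes br :: "'a::euclidean_space \<Rightarrow> 'a \<Rightarrow> 'b::euclidean_space"
  assumes bl: "bilinear br" and as: "\<forall>x y. br x y = - br y x" and h: "horiz_affine br f"
  shows "gd f (Y, br Y W)"
  unfolding gd_def
proof
  fix p :: "'a \<times> 'b"
  obtain X Z where p: "p = (X, Z)" by (cases p)
  show "aff (\<lambda>t. f (p + t *\<^sub>R (Y, br Y W)))"
    unfolding p using regulus[OF bl as h, of X Y Z W] by simp
qed

lemma gd_horiz:
  fixes br :: "'a::euclidean_space \<Rightarrow> 'a \<Rightarrow> 'b::euclidean_space"
  assumes bl: "bilinear br" and as: "\<forall>x y. br x y = - br y x" and h: "horiz_affine br f"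
  shows "gd f (Y, 0)"
  using gdE[OF bl as h, of Y 0] by (simp add: bilinear_rzero[OF bl])

lemma gd_vert:
  fixes br :: "'a::euclidean_space \<Rightarrow> 'a \<Rightarrow> 'b::euclidean_space"
  assumes bl: "bilinear br" and as: "\<forall>x y. br x y = - br y x" and h: "horiz_affine br f"
  shows "gd f (0, br y w)"
proof -
  have u: "gd f (y, br y w)" by (rule gdE[OF bl as h])
  have v: "gd f (y, br y (- w))" by (rule gdE[OF bl as h])
  have uv: "gd f ((y, br y w) + (y, br y (- w)))"
    using gd_horiz[OF bl as h, of "y + y"] by (simp add: bilinear_rneg[OF bl])
  have "gd f ((1/2) *\<^sub>R (y, br y w) + (-1/2) *\<^sub>R (y, br y (- w)))"
    by (rule gd_plane[OF u v uv])
  moreover have "(1/2) *\<^sub>R (y, br y w) + (-1/2) *\<^sub>R (y, br y (- w)) = (0, br y w)"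
  proof -
    have "(1/2) *\<^sub>R br y w + (1/2) *\<^sub>R br y w = (1/2 + 1/2) *\<^sub>R br y w"
      by (rule scaleR_left_distrib[symmetric])
    then show ?thesis by (simp add: bilinear_rneg[OF bl])
  qed
  ultimately show ?thesis by simp
qed



lemma bracket_basis:
  fixes br :: "'a::euclidean_space \<Rightarrow> 'a \<Rightarrow> 'b::euclidean_space"
  assumes st: "step2_carnot br" and d3: "DIM('b) = 3"
  obtains y1 w1 y2 w2 y3 w3 and k1 k2 k3 :: "'b \<Rightarrow> real" where
    "linear k1" "linear k2" "linear k3"
    "\<And>c. c = k1 c *\<^sub>R br y1 w1 + k2 c *\<^sub>R br y2 w2 + k3 c *\<^sub>R br y3 w3"
    "\<And>t1 t2 t3. k1 (t1 *\<^sub>R br y1 w1 + t2 *\<^sub>R br y2 w2 + t3 *\<^sub>R br y3 w3) = t1"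
    "\<And>t1 t2 t3. k2 (t1 *\<^sub>R br y1 w1 + t2 *\<^sub>R br y2 w2 + t3 *\<^sub>R br y3 w3) = t2"
    "\<And>t1 t2 t3. k3 (t1 *\<^sub>R br y1 w1 + t2 *\<^sub>R br y2 w2 + t3 *\<^sub>R br y3 w3) = t3"
proof -
  define S where "S = range (\<lambda>(y, w). br y w)"
  have spS: "span S = UNIV" using st unfolding step2_carnot_def S_def by blast
  obtain B where BS: "B \<subseteq> S" and indB: "independent B" and SB: "S \<subseteq> span B" and cB: "card B = dim S"
    by (rule basis_exists)
  have "dim S = dim (span S)" by simp
  also have "\<dots> = 3" unfolding spS using d3 by simp
  finally have "card B = 3" using cB by simp
  then obtain c1 c2 c3 where B: "B = {c1, c2, c3}" and d12: "c1 \<noteq> c2" and d23: "c2 \<noteq> c3" and d13: "c1 \<noteq> c3"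
    by (auto simp: card_3_iff)
  have "c1 \<in> S" "c2 \<in> S" "c3 \<in> S" using BS B by auto
  then obtain y1 w1 y2 w2 y3 w3 where c1: "c1 = br y1 w1" and c2: "c2 = br y2 w2" and c3: "c3 = br y3 w3"
    unfolding S_def by auto
  have uniq: "t1 = 0 \<and> t2 = 0 \<and> t3 = 0" if "t1 *\<^sub>R c1 + t2 *\<^sub>R c2 + t3 *\<^sub>R c3 = 0" for t1 t2 t3
  proof -
    define u where "u v = (if v = c1 then t1 else if v = c2 then t2 else t3)" for v
    have "(\<Sum>v\<in>B. u v *\<^sub>R v) = t1 *\<^sub>R c1 + t2 *\<^sub>R c2 + t3 *\<^sub>R c3"
      unfolding B u_def using d12 d23 d13 by (simp add: sum.insert_if)
    then have "(\<Sum>v\<in>B. u v *\<^sub>R v) = 0" using that by simp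
    then have "\<forall>v\<in>B. u v = 0" using indB unfolding independent_explicit by blast
    then show ?thesis unfolding B u_def using d12 d23 d13 by auto
  qed
  have spB: "span B = UNIV"
    by (metis SB span_mono span_span spS top.extremum_uniqueI)
  have ex: "\<exists>t. c = fst t *\<^sub>R c1 + fst (snd t) *\<^sub>R c2 + snd (snd t) *\<^sub>R c3" for c
  proof -
    have "finite B" using indB finiteI_independent by blast
    have "c \<in> range (\<lambda>u. \<Sum>v\<in>B. u v *\<^sub>R v)" using span_finite[OF \<open>finite B\<close>] spB by blast
    then obtain u where "c = (\<Sum>v\<in>B. u v *\<^sub>R v)" by blast
    also have "\<dots> = u c1 *\<^sub>R c1 + u c2 *\<^sub>R c2 + u c3 *\<^sub>R c3"
      unfolding B using d12 d23 d13 by (simp add: sum.insert_if)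
    finally show ?thesis by (intro exI[where x="(u c1, u c2, u c3)"]) simp
  qed
  define K where "K c = (SOME t. c = fst t *\<^sub>R c1 + fst (snd t) *\<^sub>R c2 + snd (snd t) *\<^sub>R c3)" for c
  define k1 where "k1 c = fst (K c)" for c
  define k2 where "k2 c = fst (snd (K c))" for c
  define k3 where "k3 c = snd (snd (K c))" for c
  have rep: "c = k1 c *\<^sub>R c1 + k2 c *\<^sub>R c2 + k3 c *\<^sub>R c3" for c
    unfolding k1_def k2_def k3_def K_def by (rule someI_ex[OF ex])
  have coord: "k1 c = t1 \<and> k2 c = t2 \<and> k3 c = t3" if "c = t1 *\<^sub>R c1 + t2 *\<^sub>R c2 + t3 *\<^sub>R c3" for c t1 t2 t3
  proof -
    have "(k1 c - t1) *\<^sub>R c1 + (k2 c - t2) *\<^sub>R c2 + (k3 c - t3) *\<^sub>R c3 = 0"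
      using rep[of c] that by (simp add: algebra_simps)
    from uniq[OF this] show ?thesis by simp
  qed
  have lin: "linear k1 \<and> linear k2 \<and> linear k3"
  proof -
    have add: "k1 (a + b) = k1 a + k1 b \<and> k2 (a + b) = k2 a + k2 b \<and> k3 (a + b) = k3 a + k3 b" for a b
    proof (rule coord)
      show "a + b = (k1 a + k1 b) *\<^sub>R c1 + (k2 a + k2 b) *\<^sub>R c2 + (k3 a + k3 b) *\<^sub>R c3"
      proof -
        have "a + b = (k1 a *\<^sub>R c1 + k2 a *\<^sub>R c2 + k3 a *\<^sub>R c3) + (k1 b *\<^sub>R c1 + k2 b *\<^sub>R c2 + k3 b *\<^sub>R c3)"
          by (intro arg_cong2[where f="(+)"] rep)
        then show ?thesis by (simp add: algebra_simps)
      qed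
    qed
    have sc: "k1 (r *\<^sub>R a) = r * k1 a \<and> k2 (r *\<^sub>R a) = r * k2 a \<and> k3 (r *\<^sub>R a) = r * k3 a" for r a
    proof (rule coord)
      show "r *\<^sub>R a = (r * k1 a) *\<^sub>R c1 + (r * k2 a) *\<^sub>R c2 + (r * k3 a) *\<^sub>R c3"
        using rep[of a] by (metis (no_types, lifting) scaleR_right_distrib scaleR_scaleR)
    qed
    show ?thesis using add sc by (auto intro!: linearI)
  qed
  show ?thesis
  proof (rule that[of k1 k2 k3 y1 w1 y2 w2 y3 w3])
    show "linear k1" "linear k2" "linear k3" using lin by auto
    show "\<And>c. c = k1 c *\<^sub>R br y1 w1 + k2 c *\<^sub>R br y2 w2 + k3 c *\<^sub>R br y3 w3"
      using rep c1 c2 c3 by simp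
    show "\<And>t1 t2 t3. k1 (t1 *\<^sub>R br y1 w1 + t2 *\<^sub>R br y2 w2 + t3 *\<^sub>R br y3 w3) = t1"
      using coord c1 c2 c3 by blast
    show "\<And>t1 t2 t3. k2 (t1 *\<^sub>R br y1 w1 + t2 *\<^sub>R br y2 w2 + t3 *\<^sub>R br y3 w3) = t2"
      using coord c1 c2 c3 by blast
    show "\<And>t1 t2 t3. k3 (t1 *\<^sub>R br y1 w1 + t2 *\<^sub>R br y2 w2 + t3 *\<^sub>R br y3 w3) = t3"
      using coord c1 c2 c3 by blast
  qed
qed

lemma tri:
  fixes P :: "real \<Rightarrow> real \<Rightarrow> real \<Rightarrow> real"
  assumes a1: "\<And>t2 t3. aff (\<lambda>t1. P t1 t2 t3)" and a2: "\<And>t1 t3. aff (\<lambda>t2. P t1 t2 t3)"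
    and a3: "\<And>t1 t2. aff (\<lambda>t3. P t1 t2 t3)"
  shows "P t1 t2 t3 = P 0 0 0 + (P 1 0 0 - P 0 0 0) * t1 + (P 0 1 0 - P 0 0 0) * t2 + (P 0 0 1 - P 0 0 0) * t3
     + (P 1 1 0 - P 1 0 0 - P 0 1 0 + P 0 0 0) * (t1 * t2)
     + (P 1 0 1 - P 1 0 0 - P 0 0 1 + P 0 0 0) * (t1 * t3)
     + (P 0 1 1 - P 0 1 0 - P 0 0 1 + P 0 0 0) * (t2 * t3)
     + (P 1 1 1 - P 1 1 0 - P 1 0 1 - P 0 1 1 + P 1 0 0 + P 0 1 0 + P 0 0 1 - P 0 0 0) * (t1 * t2 * t3)"
proof -
  have s1: "P t1 t2 t3 = P 0 t2 t3 + t1 * (P 1 t2 t3 - P 0 t2 t3)" using affD[OF a1] .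
  have s2: "P e t2 t3 = P e 0 t3 + t2 * (P e 1 t3 - P e 0 t3)" for e using affD[OF a2] .
  have s3: "P e e' t3 = P e e' 0 + t3 * (P e e' 1 - P e e' 0)" for e e' using affD[OF a3] .
  show ?thesis
    unfolding s1 s2[of 0] s2[of 1] s3[of 0 0] s3[of 0 1] s3[of 1 0] s3[of 1 1]
    by (simp add: algebra_simps)
qed

lemma cubic_coeff:
  fixes a0 a1 a2 a3 a12 a13 a23 a123 :: real
  assumes P: "\<And>t1 t2 t3. P t1 t2 t3 = a0 + a1 * t1 + a2 * t2 + a3 * t3 + a12 * (t1 * t2) + a13 * (t1 * t3)
       + a23 * (t2 * t3) + a123 * (t1 * t2 * t3)"
    and A: "aff (\<lambda>s. P (t1 + s * d1) (t2 + s * d2) (t3 + s * d3))"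
  shows "a12 * d1 * d2 + a13 * d1 * d3 + a23 * d2 * d3 + a123 * (d1 * d2 * t3 + d1 * d3 * t2 + d2 * d3 * t1) = 0"
proof -
  define A0 where "A0 = P t1 t2 t3"
  define B0 where "B0 = a1 * d1 + a2 * d2 + a3 * d3 + a12 * (t1 * d2 + d1 * t2) + a13 * (t1 * d3 + d1 * t3)
     + a23 * (t2 * d3 + d2 * t3) + a123 * (d1 * t2 * t3 + t1 * d2 * t3 + t1 * t2 * d3)"
  define C0 where "C0 = a12 * d1 * d2 + a13 * d1 * d3 + a23 * d2 * d3 + a123 * (d1 * d2 * t3 + d1 * d3 * t2 + d2 * d3 * t1)"
  define D0 where "D0 = a123 * d1 * d2 * d3"
  have "(\<lambda>s. P (t1 + s * d1) (t2 + s * d2) (t3 + s * d3)) = (\<lambda>s. A0 + B0 * s + C0 * s^2 + D0 * s^3)"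
    unfolding A0_def B0_def C0_def D0_def P
    by (rule ext) (simp add: algebra_simps power2_eq_square power3_eq_cube)
  with A have "aff (\<lambda>s. A0 + B0 * s + C0 * s^2 + D0 * s^3)" by simp
  from aff_cubic[OF this] show ?thesis unfolding C0_def by simp
qed



lemma Q0:
  fixes br :: "'a::euclidean_space \<Rightarrow> 'a \<Rightarrow> 'b::euclidean_space" and B :: "'b \<Rightarrow> 'b \<Rightarrow> real"
  assumes st: "step2_carnot br" and d3: "DIM('b) = 3" and bB: "bilinear B"
    and sy: "\<And>c c'. B c c' = B c' c" and iso: "\<And>y w. B (br y w) (br y w) = 0"
  shows "B c c' = 0"
proof -
  have bl: "bilinear br" and as: "\<forall>x y. br x y = - br y x"
    and spS: "span (range (\<lambda>(x, y). br x y)) = UNIV" using st unfolding step2_carnot_def by blast+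
  have Bl: "B (a + b) c = B a c + B b c" "B (r *\<^sub>R a) c = r * B a c" "B (- a) c = - B a c"
    "B c (a + b) = B c a + B c b" "B c (r *\<^sub>R a) = r * B c a" "B c (- a) = - B c a"
    "B 0 c = 0" "B c 0 = 0" for a b c r
    using bilinear_ladd[OF bB] bilinear_lmul[OF bB] bilinear_lneg[OF bB]
      bilinear_radd[OF bB] bilinear_rmul[OF bB] bilinear_rneg[OF bB]
      bilinear_lzero[OF bB] bilinear_rzero[OF bB] by auto
  have anti: "br a b = - br b a" for a b using as by blast
  have self: "br a a = 0" for a using br_self[OF as] .
  have pb: "B (br y w) (br y w') = 0" for y w w'
  proof -
    have "B (br y (w + w')) (br y (w + w')) = 0" by (rule iso)
    then have "B (br y w) (br y w) + B (br y w) (br y w') + (B (br y w') (br y w) + B (br y w') (br y w')) = 0"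
      by (simp add: bilinear_radd[OF bl] Bl)
    then have "2 * B (br y w) (br y w') = 0" using iso[of y w] iso[of y w'] sy[of "br y w'" "br y w"] by simp
    then show ?thesis by simp
  qed
  have pc: "B (br y w) (br y' w') + B (br y' w) (br y w') = 0" for y w y' w'
  proof -
    have "B (br (y + y') w) (br (y + y') w') = 0" by (rule pb)
    then have "B (br y w) (br y w') + B (br y w) (br y' w') + (B (br y' w) (br y w') + B (br y' w) (br y' w')) = 0"
      by (simp add: bilinear_ladd[OF bl] Bl)
    then show ?thesis using pb[of y w w'] pb[of y' w w'] by simp
  qed
  have phi: "B (br u1 u2) (br u3 u4) = 0" for u1 u2 u3 u4
  proof (rule ccontr)
    assume nz: "B (br u1 u2) (br u3 u4) \<noteq> 0"
    define p where "p = B (br u1 u2) (br u3 u4)"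
    define v1 where "v1 = br u1 u2"
    define v2 where "v2 = br u1 u3"
    define v3 where "v3 = br u1 u4"
    define v4 where "v4 = br u2 u3"
    have x1: "B v1 (br u3 u4) = p" "B v2 (br u3 u4) = 0" "B v3 (br u3 u4) = 0" "B v4 (br u3 u4) = 0"
    proof -
      show "B v1 (br u3 u4) = p" unfolding v1_def p_def ..
      show "B v2 (br u3 u4) = 0" using pc[of u1 u3 u3 u4] unfolding v2_def by (simp add: self Bl)
      show "B v3 (br u3 u4) = 0" using pb[of u4 u1 u3] unfolding v3_def
        by (simp add: anti[of u1 u4] anti[of u3 u4] Bl)
      show "B v4 (br u3 u4) = 0" using pb[of u3 u2 u4] unfolding v4_def
        by (simp add: anti[of u2 u3] Bl)
    qed
    have k: "B (br u2 u3) (br u1 u4) = p"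
      using pc[of u1 u2 u3 u4] unfolding p_def by (simp add: anti[of u3 u2] Bl)
    have x2: "B v2 (br u2 u4) = - p" "B v3 (br u2 u4) = 0" "B v4 (br u2 u4) = 0"
    proof -
      show "B v2 (br u2 u4) = - p" using pc[of u1 u3 u2 u4] k unfolding v2_def by simp
      show "B v3 (br u2 u4) = 0" using pb[of u4 u1 u2] unfolding v3_def
        by (simp add: anti[of u1 u4] anti[of u2 u4] Bl)
      show "B v4 (br u2 u4) = 0" using pb[of u2 u3 u4] unfolding v4_def .
    qed
    have x3: "B v3 (br u2 u3) = p" "B v4 (br u2 u3) = 0"
    proof -
      show "B v3 (br u2 u3) = p" using k sy unfolding v3_def by metis
      show "B v4 (br u2 u3) = 0" using pb[of u2 u3 u3] unfolding v4_def .
    qed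
    have x4: "B v4 (br u1 u4) = p" using k unfolding v4_def .
    have indep: "l1 = 0 \<and> l2 = 0 \<and> l3 = 0 \<and> l4 = 0"
      if "l1 *\<^sub>R v1 + l2 *\<^sub>R v2 + l3 *\<^sub>R v3 + l4 *\<^sub>R v4 = 0" for l1 l2 l3 l4
    proof -
      have E: "B (l1 *\<^sub>R v1 + l2 *\<^sub>R v2 + l3 *\<^sub>R v3 + l4 *\<^sub>R v4) c = 0" for c
        using that by (simp add: Bl)
      have "l1 * p = 0" using E[of "br u3 u4"] x1 by (simp add: Bl)
      then have h1: "l1 = 0" using nz p_def by simp
      have "l2 * (- p) = 0" using E[of "br u2 u4"] x2 h1 by (simp add: Bl)
      then have h2: "l2 = 0" using nz p_def by simp
      have "l3 * p = 0" using E[of "br u2 u3"] x3 h1 h2 by (simp add: Bl)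
      then have h3: "l3 = 0" using nz p_def by simp
      have "l4 * p = 0" using E[of "br u1 u4"] x4 h1 h2 h3 by (simp add: Bl)
      then have h4: "l4 = 0" using nz p_def by simp
      show ?thesis using h1 h2 h3 h4 by simp
    qed
    have dist: "v1 \<noteq> v2" "v1 \<noteq> v3" "v1 \<noteq> v4" "v2 \<noteq> v3" "v2 \<noteq> v4" "v3 \<noteq> v4"
    proof -
      show "v1 \<noteq> v2" using indep[of 1 "-1" 0 0] by auto
      show "v1 \<noteq> v3" using indep[of 1 0 "-1" 0] by auto
      show "v1 \<noteq> v4" using indep[of 1 0 0 "-1"] by auto
      show "v2 \<noteq> v3" using indep[of 0 1 "-1" 0] by auto
      show "v2 \<noteq> v4" using indep[of 0 1 0 "-1"] by auto
      show "v3 \<noteq> v4" using indep[of 0 0 1 "-1"] by auto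
    qed
    define V where "V = {v1, v2, v3, v4}"
    have cV: "card V = 4" unfolding V_def using dist by auto
    have "independent V" unfolding independent_explicit
    proof (intro conjI allI impI)
      show "finite V" unfolding V_def by simp
      fix u assume "(\<Sum>v\<in>V. u v *\<^sub>R v) = 0"
      then have "u v1 *\<^sub>R v1 + u v2 *\<^sub>R v2 + u v3 *\<^sub>R v3 + u v4 *\<^sub>R v4 = 0"
        unfolding V_def using dist by (simp add: sum.insert_if add.assoc)
      from indep[OF this] show "\<forall>v\<in>V. u v = 0" unfolding V_def by auto
    qed
    from independent_bound[OF this] have "card V \<le> 3" using d3 by simp
    with cV show False by simp
  qed
  have L1: "B c (br y w) = 0" for c y w
  proof -
    have lin: "linear (\<lambda>c. B c (br y w))" using bB unfolding bilinear_def by blast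
    have mem: "c \<in> span (range (\<lambda>(x, y). br x y))" using spS by simp
    show ?thesis
      by (rule linear_eq_0_on_span[OF lin _ mem]) (auto simp: phi)
  qed
  have lin: "linear (\<lambda>c'. B c c')" using bB unfolding bilinear_def by blast
  have mem: "c' \<in> span (range (\<lambda>(x, y). br x y))" using spS by simp
  show ?thesis
    by (rule linear_eq_0_on_span[OF lin _ mem]) (auto simp: L1)
qed



lemma bil_from_lin:
  fixes k1 k2 k3 :: "'b::real_vector \<Rightarrow> real"
  assumes l1: "linear k1" and l2: "linear k2" and l3: "linear k3"
  shows "bilinear (\<lambda>c c'. a12 * (k1 c * k2 c' + k2 c * k1 c') + a13 * (k1 c * k3 c' + k3 c * k1 c')
            + a23 * (k2 c * k3 c' + k3 c * k2 c'))"
  unfolding bilinear_def linear_iff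
  by (simp add: linear_add[OF l1] linear_add[OF l2] linear_add[OF l3]
      linear_scale[OF l1] linear_scale[OF l2] linear_scale[OF l3] algebra_simps)

lemma vert_lin:
  fixes br :: "'a::euclidean_space \<Rightarrow> 'a \<Rightarrow> 'b::euclidean_space" and f :: "'a \<times> 'b \<Rightarrow> real"
  assumes st: "step2_carnot br" and d3: "DIM('b) = 3" and h: "horiz_affine br f"
  shows "linear (\<lambda>z. f (x, z) - f (x, 0))"
proof -
  have bl: "bilinear br" and as: "\<forall>x y. br x y = - br y x"
    using st unfolding step2_carnot_def by blast+
  obtain k1 k2 k3 :: "'b \<Rightarrow> real" and y1 w1 y2 w2 y3 w3 where
    lk1: "linear k1" and lk2: "linear k2" and lk3: "linear k3"
    and rep0: "\<And>c. c = k1 c *\<^sub>R br y1 w1 + k2 c *\<^sub>R br y2 w2 + k3 c *\<^sub>R br y3 w3"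
    and ko1: "\<And>t1 t2 t3. k1 (t1 *\<^sub>R br y1 w1 + t2 *\<^sub>R br y2 w2 + t3 *\<^sub>R br y3 w3) = t1"
    and ko2: "\<And>t1 t2 t3. k2 (t1 *\<^sub>R br y1 w1 + t2 *\<^sub>R br y2 w2 + t3 *\<^sub>R br y3 w3) = t2"
    and ko3: "\<And>t1 t2 t3. k3 (t1 *\<^sub>R br y1 w1 + t2 *\<^sub>R br y2 w2 + t3 *\<^sub>R br y3 w3) = t3"
    by (rule bracket_basis[OF st d3]) blast
  define c1 where "c1 = br y1 w1"
  define c2 where "c2 = br y2 w2"
  define c3 where "c3 = br y3 w3"
  note rep = rep0[folded c1_def c2_def c3_def]
  note k1 = ko1[folded c1_def c2_def c3_def]
  note k2 = ko2[folded c1_def c2_def c3_def]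
  note k3 = ko3[folded c1_def c2_def c3_def]
  have kv: "k1 c1 = 1" "k2 c1 = 0" "k3 c1 = 0" "k1 c2 = 0" "k2 c2 = 1" "k3 c2 = 0"
    "k1 c3 = 0" "k2 c3 = 0" "k3 c3 = 1"
    using k1[of 1 0 0] k2[of 1 0 0] k3[of 1 0 0] k1[of 0 1 0] k2[of 0 1 0] k3[of 0 1 0]
      k1[of 0 0 1] k2[of 0 0 1] k3[of 0 0 1] by simp_all
  have gv: "gd f (0, br y w)" for y w by (rule gd_vert[OF bl as h])
  have mv: "aff (\<lambda>s. f ((x, z) + s *\<^sub>R (0, br y w)))" for z y w
    using gv[of y w] unfolding gd_def by blast
  define P where "P t1 t2 t3 = f (x, t1 *\<^sub>R c1 + t2 *\<^sub>R c2 + t3 *\<^sub>R c3)" for t1 t2 t3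
  have a1: "aff (\<lambda>t1. P t1 t2 t3)" for t2 t3
  proof -
    have "(\<lambda>t1. P t1 t2 t3) = (\<lambda>s. f ((x, t2 *\<^sub>R c2 + t3 *\<^sub>R c3) + s *\<^sub>R (0, br y1 w1)))"
      unfolding P_def c1_def by (rule ext) (simp add: algebra_simps)
    then show ?thesis using mv by simp
  qed
  have a2: "aff (\<lambda>t2. P t1 t2 t3)" for t1 t3
  proof -
    have "(\<lambda>t2. P t1 t2 t3) = (\<lambda>s. f ((x, t1 *\<^sub>R c1 + t3 *\<^sub>R c3) + s *\<^sub>R (0, br y2 w2)))"
      unfolding P_def c2_def by (rule ext) (simp add: algebra_simps)
    then show ?thesis using mv by simp
  qed
  have a3: "aff (\<lambda>t3. P t1 t2 t3)" for t1 t2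
  proof -
    have "(\<lambda>t3. P t1 t2 t3) = (\<lambda>s. f ((x, t1 *\<^sub>R c1 + t2 *\<^sub>R c2) + s *\<^sub>R (0, br y3 w3)))"
      unfolding P_def c3_def by (rule ext) (simp add: algebra_simps)
    then show ?thesis using mv by simp
  qed
  define a0 where "a0 = P 0 0 0"
  define b1 where "b1 = P 1 0 0 - P 0 0 0"
  define b2 where "b2 = P 0 1 0 - P 0 0 0"
  define b3 where "b3 = P 0 0 1 - P 0 0 0"
  define a12 where "a12 = P 1 1 0 - P 1 0 0 - P 0 1 0 + P 0 0 0"
  define a13 where "a13 = P 1 0 1 - P 1 0 0 - P 0 0 1 + P 0 0 0"
  define a23 where "a23 = P 0 1 1 - P 0 1 0 - P 0 0 1 + P 0 0 0"
  define a123 where "a123 = P 1 1 1 - P 1 1 0 - P 1 0 1 - P 0 1 1 + P 1 0 0 + P 0 1 0 + P 0 0 1 - P 0 0 0"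
  have T: "P t1 t2 t3 = a0 + b1 * t1 + b2 * t2 + b3 * t3 + a12 * (t1 * t2) + a13 * (t1 * t3)
       + a23 * (t2 * t3) + a123 * (t1 * t2 * t3)" for t1 t2 t3
    unfolding a0_def b1_def b2_def b3_def a12_def a13_def a23_def a123_def
    by (rule tri[OF a1 a2 a3])
  have C: "a12 * k1 d * k2 d + a13 * k1 d * k3 d + a23 * k2 d * k3 d
      + a123 * (k1 d * k2 d * t3 + k1 d * k3 d * t2 + k2 d * k3 d * t1) = 0"
    if dd: "d = br y w" for d y w t1 t2 t3
  proof (rule cubic_coeff[OF T])
    have "(\<lambda>s. P (t1 + s * k1 d) (t2 + s * k2 d) (t3 + s * k3 d))
        = (\<lambda>s. f ((x, t1 *\<^sub>R c1 + t2 *\<^sub>R c2 + t3 *\<^sub>R c3) + s *\<^sub>R (0, br y w)))"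
    proof (rule ext)
      fix s
      have "s *\<^sub>R br y w = s *\<^sub>R (k1 d *\<^sub>R c1 + k2 d *\<^sub>R c2 + k3 d *\<^sub>R c3)"
        using rep[of d] dd by simp
      then show "P (t1 + s * k1 d) (t2 + s * k2 d) (t3 + s * k3 d)
        = f ((x, t1 *\<^sub>R c1 + t2 *\<^sub>R c2 + t3 *\<^sub>R c3) + s *\<^sub>R (0, br y w))"
        unfolding P_def by (simp add: algebra_simps)
    qed
    then show "aff (\<lambda>s. P (t1 + s * k1 d) (t2 + s * k2 d) (t3 + s * k3 d))" using mv by simp
  qed
  define B1 where "B1 c c' = a12 * (k1 c * k2 c' + k2 c * k1 c') + a13 * (k1 c * k3 c' + k3 c * k1 c')
            + a23 * (k2 c * k3 c' + k3 c * k2 c')" for c c'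
  have bB1: "bilinear B1" unfolding B1_def by (rule bil_from_lin[OF lk1 lk2 lk3])
  have B10: "B1 c c' = 0" for c c'
  proof (rule Q0[OF st d3 bB1])
    show "B1 c c' = B1 c' c" for c c' unfolding B1_def by (simp add: algebra_simps)
    show "B1 (br y w) (br y w) = 0" for y w
      using C[of "br y w" y w 0 0 0] unfolding B1_def by (simp add: algebra_simps)
  qed
  have z12: "a12 = 0" using B10[of c1 c2] unfolding B1_def by (simp add: kv)
  have z13: "a13 = 0" using B10[of c1 c3] unfolding B1_def by (simp add: kv)
  have z23: "a23 = 0" using B10[of c2 c3] unfolding B1_def by (simp add: kv)
  define B2 where "B2 c c' = a123 * (k1 c * k2 c' + k2 c * k1 c') + 0 * (k1 c * k3 c' + k3 c * k1 c')
            + 0 * (k2 c * k3 c' + k3 c * k2 c')" for c c'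
  have bB2: "bilinear B2" unfolding B2_def by (rule bil_from_lin[OF lk1 lk2 lk3])
  have B20: "B2 c c' = 0" for c c'
  proof (rule Q0[OF st d3 bB2])
    show "B2 c c' = B2 c' c" for c c' unfolding B2_def by (simp add: algebra_simps)
    show "B2 (br y w) (br y w) = 0" for y w
      using C[of "br y w" y w 1 0 0] z12 z13 z23 unfolding B2_def by (simp add: algebra_simps)
  qed
  have z123: "a123 = 0" using B20[of c1 c2] unfolding B2_def by (simp add: kv)
  have fx: "f (x, z) = a0 + b1 * k1 z + b2 * k2 z + b3 * k3 z" for z
  proof -
    have "f (x, z) = P (k1 z) (k2 z) (k3 z)" unfolding P_def using rep[of z] by simp
    then show ?thesis using T[of "k1 z" "k2 z" "k3 z"] z12 z13 z23 z123 by simp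
  qed
  have "(\<lambda>z. f (x, z) - f (x, 0)) = (\<lambda>z. b1 * k1 z + b2 * k2 z + b3 * k3 z)"
    using fx linear_0[OF lk1] linear_0[OF lk2] linear_0[OF lk3] by (auto simp: fx)
  moreover have "linear (\<lambda>z. b1 * k1 z + b2 * k2 z + b3 * k3 z)"
    by (intro linearI) (simp_all add: linear_add[OF lk1] linear_add[OF lk2] linear_add[OF lk3]
      linear_scale[OF lk1] linear_scale[OF lk2] linear_scale[OF lk3] algebra_simps)
  ultimately show ?thesis by simp
qed



lemma riesz:
  fixes g :: "'b::euclidean_space \<Rightarrow> real"
  assumes lg: "linear g"
  shows "g c = (\<Sum>b\<in>Basis. g b *\<^sub>R b) \<bullet> c"
proof -
  have "g c = g (\<Sum>b\<in>Basis. (c \<bullet> b) *\<^sub>R b)" by (simp add: euclidean_representation)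
  also have "\<dots> = (\<Sum>b\<in>Basis. (c \<bullet> b) * g b)"
    by (simp add: linear_sum[OF lg] linear_scale[OF lg])
  also have "\<dots> = (\<Sum>b\<in>Basis. g b * (b \<bullet> c))"
    by (rule sum.cong) (simp_all add: inner_commute)
  also have "\<dots> = (\<Sum>b\<in>Basis. g b *\<^sub>R b) \<bullet> c"
    by (simp add: inner_sum_left)
  finally show ?thesis .
qed

lemma alg_core:
  fixes br :: "'a::euclidean_space \<Rightarrow> 'a \<Rightarrow> 'b::euclidean_space" and \<beta> :: "'a \<Rightarrow> 'b \<Rightarrow> real"
  assumes st: "step2_carnot br" and d3: "DIM('b) = 3" and bb: "bilinear \<beta>"
    and alt: "\<And>y w. \<beta> y (br y w) = 0" and one: "\<beta> u1 (br u2 u3) = 1"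
  defines "a1 \<equiv> \<lambda>x. \<beta> x (br u2 u3)" and "a2 \<equiv> \<lambda>x. \<beta> u1 (br x u3)" and "a3 \<equiv> \<lambda>x. \<beta> u1 (br u2 x)"
  shows "linear a1" "linear a2" "linear a3"
    "a1 u1 = 1" "a1 u2 = 0" "a1 u3 = 0" "a2 u1 = 0" "a2 u2 = 1" "a2 u3 = 0"
    "a3 u1 = 0" "a3 u2 = 0" "a3 u3 = 1"
    "\<And>y w. \<beta> u1 (br y w) = a2 y * a3 w - a3 y * a2 w"
    "\<And>y w. \<beta> u2 (br y w) = a3 y * a1 w - a1 y * a3 w"
    "\<And>y w. \<beta> u3 (br y w) = a1 y * a2 w - a2 y * a1 w"
    "\<And>c. \<beta> u1 c = 0 \<Longrightarrow> \<beta> u2 c = 0 \<Longrightarrow> \<beta> u3 c = 0 \<Longrightarrow> c = 0"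
proof -
  have bl: "bilinear br" and as: "\<forall>x y. br x y = - br y x"
    using st unfolding step2_carnot_def by blast+
  define T where "T x y w = \<beta> x (br y w)" for x y w
  have bL: "\<beta> (a + b) c = \<beta> a c + \<beta> b c" "\<beta> (r *\<^sub>R a) c = r * \<beta> a c"
    "\<beta> c' (d + e) = \<beta> c' d + \<beta> c' e" "\<beta> c' (r *\<^sub>R d) = r * \<beta> c' d" "\<beta> c' (- d) = - \<beta> c' d"
    for a b c r c' d e
    using bilinear_ladd[OF bb] bilinear_lmul[OF bb] bilinear_radd[OF bb] bilinear_rmul[OF bb]
      bilinear_rneg[OF bb] by auto
  have brL: "br (a + b) c = br a c + br b c" "br (r *\<^sub>R a) c = r *\<^sub>R br a c"
    "br c (a + b) = br c a + br c b" "br c (r *\<^sub>R a) = r *\<^sub>R br c a" for a b c r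
    using bilinear_ladd[OF bl] bilinear_lmul[OF bl] bilinear_radd[OF bl] bilinear_rmul[OF bl] by auto
  have T23: "T x y w = - T x w y" for x y w
    unfolding T_def using as[rule_format, of y w] by (simp add: bL)
  have T12: "T x y w = - T y x w" for x y w
  proof -
    have "\<beta> (x + y) (br (x + y) w) = 0" by (rule alt)
    then have "\<beta> x (br x w) + \<beta> x (br y w) + (\<beta> y (br x w) + \<beta> y (br y w)) = 0"
      by (simp add: bL brL)
    then show ?thesis unfolding T_def using alt[of x w] alt[of y w] by simp
  qed
  have Tz1: "T y y w = 0" for y w unfolding T_def by (rule alt)
  have Tz2: "T x y y = 0" for x y unfolding T_def using br_self[OF as] by (simp add: bilinear_rzero[OF bb])
  have Tz3: "T y w y = 0" for y w using T12[of y w y] Tz2[of w y] by simp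
  have t123: "T u1 u2 u3 = 1" using one unfolding T_def .
  have tab: "T u1 u3 u2 = -1" "T u2 u1 u3 = -1" "T u2 u3 u1 = 1" "T u3 u1 u2 = 1" "T u3 u2 u1 = -1"
  proof -
    show "T u1 u3 u2 = -1" using T23[of u1 u3 u2] t123 by simp
    show "T u2 u1 u3 = -1" using T12[of u2 u1 u3] t123 by simp
    show "T u2 u3 u1 = 1" using T23[of u2 u3 u1] T12[of u2 u1 u3] t123 by simp
    show "T u3 u1 u2 = 1" using T12[of u3 u1 u2] T23[of u1 u3 u2] t123 by simp
    show "T u3 u2 u1 = -1" using T23[of u3 u2 u1] T12[of u3 u1 u2] T23[of u1 u3 u2] t123 by simp
  qed
  note Tv = t123 tab Tz1 Tz2 Tz3
  have la1: "linear a1" unfolding a1_def by (intro linearI) (simp_all add: bL)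
  have la2: "linear a2" unfolding a2_def by (intro linearI) (simp_all add: bL brL)
  have la3: "linear a3" unfolding a3_def by (intro linearI) (simp_all add: bL brL)
  have av: "a1 u1 = 1" "a1 u2 = 0" "a1 u3 = 0" "a2 u1 = 0" "a2 u2 = 1" "a2 u3 = 0"
    "a3 u1 = 0" "a3 u2 = 0" "a3 u3 = 1"
    unfolding a1_def a2_def a3_def using Tv unfolding T_def by simp_all
  define R where "R x = (\<Sum>b\<in>Basis. \<beta> x b *\<^sub>R b)" for x
  have Rd: "\<beta> x c = R x \<bullet> c" for x c
    unfolding R_def by (rule riesz) (use bb in \<open>simp add: bilinear_def\<close>)
  have li: "l1 = 0 \<and> l2 = 0 \<and> l3 = 0" if "l1 *\<^sub>R R u1 + l2 *\<^sub>R R u2 + l3 *\<^sub>R R u3 = 0" for l1 l2 l3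
  proof -
    have E: "l1 * T u1 y w + l2 * T u2 y w + l3 * T u3 y w = 0" for y w
    proof -
      have "(l1 *\<^sub>R R u1 + l2 *\<^sub>R R u2 + l3 *\<^sub>R R u3) \<bullet> br y w = 0" using that by simp
      then show ?thesis unfolding T_def Rd by (simp add: inner_add_left)
    qed
    show ?thesis using E[of u2 u3] E[of u1 u3] E[of u1 u2] Tv by simp
  qed
  have dR: "R u1 \<noteq> R u2" "R u1 \<noteq> R u3" "R u2 \<noteq> R u3"
    using li[of 1 "-1" 0] li[of 1 0 "-1"] li[of 0 1 "-1"] by auto
  define RB where "RB = {R u1, R u2, R u3}"
  have iRB: "independent RB" unfolding independent_explicit
  proof (intro conjI allI impI)
    show "finite RB" unfolding RB_def by simp
    fix u assume "(\<Sum>v\<in>RB. u v *\<^sub>R v) = 0"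
    then have "u (R u1) *\<^sub>R R u1 + u (R u2) *\<^sub>R R u2 + u (R u3) *\<^sub>R R u3 = 0"
      unfolding RB_def using dR by (simp add: sum.insert_if add.assoc)
    from li[OF this] show "\<forall>v\<in>RB. u v = 0" unfolding RB_def by auto
  qed
  have cRB: "card RB = 3" unfolding RB_def using dR by auto
  have spRB: "span RB = UNIV"
  proof -
    have "UNIV \<subseteq> span RB"
      by (rule card_ge_dim_independent) (use iRB cRB d3 in auto)
    then show ?thesis by auto
  qed
  have expand: "\<beta> x c = a1 x * \<beta> u1 c + a2 x * \<beta> u2 c + a3 x * \<beta> u3 c" for x c
  proof -
    have "R x \<in> span RB" using spRB by simp
    then obtain m where "R x = (\<Sum>v\<in>RB. m v *\<^sub>R v)"
      using span_finite[of RB] unfolding RB_def by auto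
    then have Rx: "R x = m (R u1) *\<^sub>R R u1 + m (R u2) *\<^sub>R R u2 + m (R u3) *\<^sub>R R u3"
      unfolding RB_def using dR by (simp add: sum.insert_if add.assoc)
    have D: "\<beta> x c' = m (R u1) * \<beta> u1 c' + m (R u2) * \<beta> u2 c' + m (R u3) * \<beta> u3 c'" for c'
      unfolding Rd Rx by (simp add: inner_add_left)
    have m1: "m (R u1) = a1 x" using D[of "br u2 u3"] Tv unfolding a1_def T_def by simp
    have m2: "m (R u2) = a2 x"
    proof -
      have "T x u1 u3 = - m (R u2)" using D[of "br u1 u3"] Tv unfolding T_def by simp
      moreover have "a2 x = - T x u1 u3" unfolding a2_def using T12[of u1 x u3] unfolding T_def by simp
      ultimately show ?thesis by simp
    qed
    have m3: "m (R u3) = a3 x"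
    proof -
      have "T x u1 u2 = m (R u3)" using D[of "br u1 u2"] Tv unfolding T_def by simp
      moreover have "a3 x = T x u1 u2" unfolding a3_def
        using T12[of u1 u2 x] T23[of u2 u1 x] T12[of u2 x u1] T23[of x u2 u1] unfolding T_def by simp
      ultimately show ?thesis by simp
    qed
    show ?thesis using D[of c] m1 m2 m3 by simp
  qed
  have E1: "T x y w = a1 x * T u1 y w + a2 x * T u2 y w + a3 x * T u3 y w" for x y w
    unfolding T_def by (rule expand)
  have E2: "T x y w = a1 y * T x u1 w + a2 y * T x u2 w + a3 y * T x u3 w" for x y w
    using T12[of x y w] E1[of y x w] T12[of u1 x w] T12[of u2 x w] T12[of u3 x w] by simp
  have E3: "T x y w = a1 w * T x y u1 + a2 w * T x y u2 + a3 w * T x y u3" for x y w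
    using T23[of x y w] E2[of x w y] T23[of x u1 y] T23[of x u2 y] T23[of x u3 y] by simp
  have F: "T u y w = a1 y * (a1 w * T u u1 u1 + a2 w * T u u1 u2 + a3 w * T u u1 u3)
     + a2 y * (a1 w * T u u2 u1 + a2 w * T u u2 u2 + a3 w * T u u2 u3)
     + a3 y * (a1 w * T u u3 u1 + a2 w * T u u3 u2 + a3 w * T u u3 u3)" for u y w
    using E2[of u y w] E3[of u u1 w] E3[of u u2 w] E3[of u u3 w] by simp
  show "linear a1" "linear a2" "linear a3" by (fact la1 la2 la3)+
  show "a1 u1 = 1" "a1 u2 = 0" "a1 u3 = 0" "a2 u1 = 0" "a2 u2 = 1" "a2 u3 = 0"
    "a3 u1 = 0" "a3 u2 = 0" "a3 u3 = 1" by (fact av)+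
  show "\<beta> u1 (br y w) = a2 y * a3 w - a3 y * a2 w" for y w
    using F[of u1 y w] Tv unfolding T_def by (simp add: algebra_simps)
  show "\<beta> u2 (br y w) = a3 y * a1 w - a1 y * a3 w" for y w
    using F[of u2 y w] Tv unfolding T_def by (simp add: algebra_simps)
  show "\<beta> u3 (br y w) = a1 y * a2 w - a2 y * a1 w" for y w
    using F[of u3 y w] Tv unfolding T_def by (simp add: algebra_simps)
  show "c = 0" if "\<beta> u1 c = 0" "\<beta> u2 c = 0" "\<beta> u3 c = 0" for c
  proof -
    have "orthogonal c v" if "v \<in> RB" for v
      using that \<open>\<beta> u1 c = 0\<close> \<open>\<beta> u2 c = 0\<close> \<open>\<beta> u3 c = 0\<close> unfolding RB_def orthogonal_def Rd
      by (auto simp: inner_commute)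
    then have "orthogonal c c" using orthogonal_to_span[of c RB c] spRB by simp
    then show "c = 0" by (simp add: orthogonal_def)
  qed
qed



lemma vec3_eqI:
  fixes a b :: "real^3"
  assumes "a$1 = b$1" "a$2 = b$2" "a$3 = b$3"
  shows "a = b"
  using assms unfolding vec_eq_iff by (metis exhaust_3)

lemma iso_construct:
  fixes br :: "'a::euclidean_space \<Rightarrow> 'a \<Rightarrow> 'b::euclidean_space"
    and a1 a2 a3 :: "'a \<Rightarrow> real" and g1 g2 g3 :: "'b \<Rightarrow> real"
  assumes st: "step2_carnot br"
    and la1: "linear a1" and la2: "linear a2" and la3: "linear a3"
    and lg1: "linear g1" and lg2: "linear g2" and lg3: "linear g3"
    and av: "a1 u1 = 1" "a1 u2 = 0" "a1 u3 = 0" "a2 u1 = 0" "a2 u2 = 1" "a2 u3 = 0"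
    "a3 u1 = 0" "a3 u2 = 0" "a3 u3 = 1"
    and gb1: "\<And>y w. g1 (br y w) = a2 y * a3 w - a3 y * a2 w"
    and gb2: "\<And>y w. g2 (br y w) = a3 y * a1 w - a1 y * a3 w"
    and gb3: "\<And>y w. g3 (br y w) = a1 y * a2 w - a2 y * a1 w"
    and gz: "\<And>c. g1 c = 0 \<Longrightarrow> g2 c = 0 \<Longrightarrow> g3 c = 0 \<Longrightarrow> c = 0"
  shows "\<exists>d. iso_F3Rd br d"
proof -
  define th where "th x = (vector [a1 x, a2 x, a3 x] :: real^3)" for x
  define p2 where "p2 c = (vector [g3 c, - g2 c, g1 c] :: real^3)" for c
  have th_c: "th x $ 1 = a1 x" "th x $ 2 = a2 x" "th x $ 3 = a3 x" for x unfolding th_def by simp_all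
  have p2_c: "p2 c $ 1 = g3 c" "p2 c $ 2 = - g2 c" "p2 c $ 3 = g1 c" for c unfolding p2_def by simp_all
  have lth: "linear th"
    by (intro linearI vec3_eqI) (simp_all add: th_c linear_add[OF la1] linear_add[OF la2] linear_add[OF la3]
        linear_scale[OF la1] linear_scale[OF la2] linear_scale[OF la3])
  have lp2: "linear p2"
    by (intro linearI vec3_eqI) (simp_all add: p2_c linear_add[OF lg1] linear_add[OF lg2] linear_add[OF lg3]
        linear_scale[OF lg1] linear_scale[OF lg2] linear_scale[OF lg3])
  have brk: "p2 (br y w) = wedge3 (th y) (th w)" for y w
    by (rule vec3_eqI) (simp_all add: wedge3_def p2_c th_c gb1 gb2 gb3 algebra_simps)
  have inj2: "inj p2"
  proof (rule injI)
    fix c c' assume "p2 c = p2 c'"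
    then have "g1 c = g1 c'" "g2 c = g2 c'" "g3 c = g3 c'"
      using p2_c[of c] p2_c[of c'] by (metis neg_equal_iff_equal)+
    then have "g1 (c - c') = 0" "g2 (c - c') = 0" "g3 (c - c') = 0"
      by (simp_all add: linear_diff[OF lg1] linear_diff[OF lg2] linear_diff[OF lg3])
    from gz[OF this] show "c = c'" by simp
  qed
  have surj2: "surj p2"
  proof -
    have "v = p2 (v$1 *\<^sub>R br u1 u2 + v$2 *\<^sub>R br u1 u3 + v$3 *\<^sub>R br u2 u3)" for v
      by (rule vec3_eqI) (simp_all add: p2_c linear_add[OF lg1] linear_add[OF lg2] linear_add[OF lg3]
        linear_scale[OF lg1] linear_scale[OF lg2] linear_scale[OF lg3] gb1 gb2 gb3 av)
    then show ?thesis unfolding surj_def by blast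
  qed
  define K where "K = {x. th x = 0}"
  have subK: "subspace K" unfolding K_def by (rule linear_subspace_kernel[OF lth])
  obtain OB where OBK: "OB \<subseteq> K" and OBo: "pairwise orthogonal OB" and OBn: "\<And>x. x \<in> OB \<Longrightarrow> norm x = 1"
    and OBi: "independent OB" and OBs: "span OB = K"
    using orthonormal_basis_subspace[OF subK] by metis
  have fOB: "finite OB" using OBi finiteI_independent by blast
  define d where "d = card OB"
  obtain e where be: "bij_betw e {0..<d} OB" using ex_bij_betw_nat_finite[OF fOB] unfolding d_def by blast
  have eOB: "i < d \<Longrightarrow> e i \<in> OB" for i using be unfolding bij_betw_def by auto
  have eonto: "b \<in> OB \<Longrightarrow> \<exists>i<d. e i = b" for b using be unfolding bij_betw_def by auto
  have einj: "i < d \<Longrightarrow> j < d \<Longrightarrow> e i = e j \<Longrightarrow> i = j" for i j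
    using be unfolding bij_betw_def inj_on_def by auto
  have eo: "e i \<bullet> e j = (if i = j then 1 else 0)" if "i < d" "j < d" for i j
  proof (cases "i = j")
    case True then show ?thesis using OBn[OF eOB[OF that(1)]] by (simp add: norm_eq_1)
  next
    case False
    then have "e i \<noteq> e j" using einj that by blast
    then show ?thesis using OBo eOB[OF that(1)] eOB[OF that(2)] False
      unfolding pairwise_def orthogonal_def by auto
  qed
  have eK: "i < d \<Longrightarrow> th (e i) = 0" for i using eOB OBK unfolding K_def by auto
  have kz: "x = 0" if "th x = 0" "\<And>i. i < d \<Longrightarrow> x \<bullet> e i = 0" for x
  proof -
    have "x \<in> span OB" using that(1) OBs unfolding K_def by simp
    moreover have "orthogonal x b" if "b \<in> OB" for b
      using eonto[OF that] \<open>\<And>i. i < d \<Longrightarrow> x \<bullet> e i = 0\<close> unfolding orthogonal_def by auto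
    ultimately have "orthogonal x x" using orthogonal_to_span by blast
    then show ?thesis by (simp add: orthogonal_def)
  qed
  define l where "l i x = x \<bullet> e i" for i x
  define Phi where "Phi x = (th x, \<lambda>i. if i < d then l i x else 0)" for x
  have ll: "linear (l i)" for i unfolding l_def by (intro linearI) (simp_all add: inner_add_left)
  have bijPhi: "bij_betw Phi UNIV (F3Rd_V1 d)"
    unfolding bij_betw_def
  proof (intro conjI)
    show "inj_on Phi UNIV"
    proof (rule inj_onI)
      fix x y assume "Phi x = Phi y"
      then have t: "th x = th y" and f: "(\<lambda>i. if i < d then l i x else 0) = (\<lambda>i. if i < d then l i y else 0)"
        unfolding Phi_def by auto
      have "th (x - y) = 0" using t by (simp add: linear_diff[OF lth])
      moreover have "(x - y) \<bullet> e i = 0" if "i < d" for i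
        using fun_cong[OF f, of i] that unfolding l_def by (simp add: inner_diff_left)
      ultimately have "x - y = 0" by (rule kz)
      then show "x = y" by simp
    qed
    show "Phi ` UNIV = F3Rd_V1 d"
    proof
      show "Phi ` UNIV \<subseteq> F3Rd_V1 d" unfolding Phi_def F3Rd_V1_def by auto
    next
      show "F3Rd_V1 d \<subseteq> Phi ` UNIV"
      proof
        fix q assume q: "q \<in> F3Rd_V1 d"
        obtain t v where qtv: "q = (t, v)" by (cases q)
        have vz: "i \<ge> d \<Longrightarrow> v i = 0" for i using q unfolding qtv F3Rd_V1_def by auto
        define x0 where "x0 = t$1 *\<^sub>R u1 + t$2 *\<^sub>R u2 + t$3 *\<^sub>R u3"
        have thx0: "th x0 = t"
          by (rule vec3_eqI) (simp_all add: x0_def th_c linear_add[OF la1] linear_add[OF la2] linear_add[OF la3]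
            linear_scale[OF la1] linear_scale[OF la2] linear_scale[OF la3] av)
        define x where "x = x0 + (\<Sum>i<d. (v i - x0 \<bullet> e i) *\<^sub>R e i)"
        have "th x = th x0 + (\<Sum>i<d. (v i - x0 \<bullet> e i) *\<^sub>R th (e i))"
          unfolding x_def by (simp add: linear_add[OF lth] linear_sum[OF lth] linear_scale[OF lth])
        also have "\<dots> = t" using thx0 eK by simp
        finally have thx: "th x = t" .
        have xe: "x \<bullet> e j = v j" if "j < d" for j
        proof -
          have "x \<bullet> e j = x0 \<bullet> e j + (\<Sum>i<d. (v i - x0 \<bullet> e i) * (e i \<bullet> e j))"
            unfolding x_def by (simp add: inner_add_left inner_sum_left)
          also have "(\<Sum>i<d. (v i - x0 \<bullet> e i) * (e i \<bullet> e j)) = (\<Sum>i<d. (if i = j then v j - x0 \<bullet> e j else 0))"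
            by (rule sum.cong) (auto simp: eo that)
          also have "\<dots> = v j - x0 \<bullet> e j" using that by simp
          finally show ?thesis by simp
        qed
        have "Phi x = q"
          unfolding Phi_def qtv using thx xe vz l_def by (auto intro!: ext simp: not_less)
        then show "q \<in> Phi ` UNIV" by (metis rangeI)
      qed
    qed
  qed
  show ?thesis unfolding iso_F3Rd_def
    apply (rule exI[where x=d], rule exI[where x=th], rule exI[where x=l], rule exI[where x=p2])
    using lth ll lp2 bijPhi inj2 surj2 brk unfolding Phi_def bij_def by auto
qed



lemma forward:
  fixes br :: "'a::euclidean_space \<Rightarrow> 'a \<Rightarrow> 'b::euclidean_space" and f :: "'a \<times> 'b \<Rightarrow> real"
  assumes st: "step2_carnot br" and d3: "DIM('b) = 3" and h: "horiz_affine br f"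
    and na: "\<not> affine_map f"
  shows "\<exists>d. iso_F3Rd br d"
proof -
  have bl: "bilinear br" and as: "\<forall>x y. br x y = - br y x"
    and spS: "span (range (\<lambda>(x, y). br x y)) = UNIV"
    using st unfolding step2_carnot_def by blast+
  have hl: "linear (\<lambda>x. f (x, z) - f (0, z))" for z
  proof -
    have "gd (\<lambda>x. f (x, z)) y" for y
      unfolding gd_def
    proof
      fix p
      have "aff (\<lambda>t. f ((p, z) + t *\<^sub>R (y, 0)))" using gd_horiz[OF bl as h, of y] unfolding gd_def by blast
      then show "aff (\<lambda>t. f (p + t *\<^sub>R y, z))" by simp
    qed
    from linear_from_gd[of "\<lambda>x. f (x, z)", OF this] show ?thesis .
  qed
  have vl: "linear (\<lambda>z. f (x, z) - f (x, 0))" for x by (rule vert_lin[OF st d3 h])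
  define \<beta> where "\<beta> x z = f (x, z) - f (x, 0) - f (0, z) + f (0, 0)" for x z
  have bb: "bilinear \<beta>"
    unfolding bilinear_def
  proof (intro conjI allI)
    fix x
    have "(\<lambda>z. \<beta> x z) = (\<lambda>z. (f (x, z) - f (x, 0)) - (f (0, z) - f (0, 0)))"
      unfolding \<beta>_def by (auto simp: algebra_simps)
    then show "linear (\<lambda>z. \<beta> x z)" using linear_compose_sub[OF vl[of x] vl[of 0]] by simp
  next
    fix z
    have "(\<lambda>x. \<beta> x z) = (\<lambda>x. (f (x, z) - f (0, z)) - (f (x, 0) - f (0, 0)))"
      unfolding \<beta>_def by (auto simp: algebra_simps)
    then show "linear (\<lambda>x. \<beta> x z)" using linear_compose_sub[OF hl[of z] hl[of 0]] by simp
  qed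
  define L where "L x = f (x, 0) - f (0, 0)" for x
  define M where "M z = f (0, z) - f (0, 0)" for z
  have lL: "linear L" unfolding L_def using hl[of 0] .
  have lM: "linear M" unfolding M_def using vl[of 0] .
  have dec: "f (x, z) = f (0, 0) + L x + M z + \<beta> x z" for x z
    unfolding L_def M_def \<beta>_def by simp
  have alt: "\<beta> y (br y w) = 0" for y w
  proof -
    have "aff (\<lambda>t. f (0 + t *\<^sub>R (y, br y w)))" using gdE[OF bl as h, of y w] unfolding gd_def by blast
    moreover have "f (0 + t *\<^sub>R (y, br y w)) = f (0, 0) + (L y + M (br y w)) * t + \<beta> y (br y w) * t^2" for t
      using dec[of "t *\<^sub>R y" "t *\<^sub>R br y w"]
      by (simp add: linear_scale[OF lL] linear_scale[OF lM] bilinear_lmul[OF bb] bilinear_rmul[OF bb]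
          power2_eq_square algebra_simps)
    ultimately have "aff (\<lambda>t. f (0, 0) + (L y + M (br y w)) * t + \<beta> y (br y w) * t^2)" by simp
    then show ?thesis by (rule aff_quad)
  qed
  have "\<exists>x0 z0. \<beta> x0 z0 \<noteq> 0"
  proof (rule ccontr)
    assume "\<not> (\<exists>x0 z0. \<beta> x0 z0 \<noteq> 0)"
    then have bz: "\<beta> x z = 0" for x z by blast
    have "affine_map f" unfolding affine_map_def
    proof (intro exI conjI allI)
      show "linear (\<lambda>p. L (fst p) + M (snd p))"
        by (intro linearI) (simp_all add: linear_add[OF lL] linear_add[OF lM] linear_scale[OF lL]
            linear_scale[OF lM] algebra_simps)
      fix v :: "'a \<times> 'b"
      show "f v = L (fst v) + M (snd v) + f (0, 0)"
        using dec[of "fst v" "snd v"] bz by simp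
    qed
    with na show False by simp
  qed
  then obtain x0 z0 where nz: "\<beta> x0 z0 \<noteq> 0" by blast
  have "\<exists>y w. \<beta> x0 (br y w) \<noteq> 0"
  proof (rule ccontr)
    assume "\<not> (\<exists>y w. \<beta> x0 (br y w) \<noteq> 0)"
    then have z: "\<beta> x0 (br y w) = 0" for y w by blast
    have lin: "linear (\<lambda>z. \<beta> x0 z)" using bb unfolding bilinear_def by blast
    have mem: "z0 \<in> span (range (\<lambda>(x, y). br x y))" using spS by simp
    have "\<beta> x0 z0 = 0" by (rule linear_eq_0_on_span[OF lin _ mem]) (auto simp: z)
    with nz show False by simp
  qed
  then obtain y0 w0 where nz2: "\<beta> x0 (br y0 w0) \<noteq> 0" by blast
  define u1 where "u1 = (1 / \<beta> x0 (br y0 w0)) *\<^sub>R x0"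
  have one: "\<beta> u1 (br y0 w0) = 1" unfolding u1_def using nz2 by (simp add: bilinear_lmul[OF bb])
  note AC = alg_core[OF st d3 bb alt one]
  have lg: "linear (\<beta> u)" for u using bb unfolding bilinear_def by blast
  show ?thesis
    by (rule iso_construct[OF st AC(1-3) lg lg lg AC(4-16)])
qed

lemma aff_sub:
  fixes br :: "'a::euclidean_space \<Rightarrow> 'a \<Rightarrow> 'b::euclidean_space" and f :: "'a \<times> 'b \<Rightarrow> real"
  assumes bl: "bilinear br" and af: "affine_map f"
  shows "horiz_affine br f"
  unfolding horiz_affine_def
proof (intro allI)
  fix p :: "'a \<times> 'b" and y :: 'a
  obtain G c where lG: "linear G" and fG: "\<And>v. f v = G v + c" using af unfolding affine_map_def by blast
  obtain x z where p: "p = (x, z)" by (cases p)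
  have "f (cmult br p (t *\<^sub>R y, 0)) = G (y, br x y) * t + (G (x, z) + c)" for t
  proof -
    have e: "cmult br p (t *\<^sub>R y, 0) = (x, z) + t *\<^sub>R (y, br x y)"
      unfolding p cmult_def by (simp add: bilinear_rmul[OF bl])
    have "f (cmult br p (t *\<^sub>R y, 0)) = G ((x, z) + t *\<^sub>R (y, br x y)) + c" unfolding fG e ..
    also have "\<dots> = G (x, z) + t * G (y, br x y) + c"
      by (simp only: linear_add[OF lG] linear_scale[OF lG] real_scaleR_def)
    finally show ?thesis by (simp add: algebra_simps)
  qed
  then show "\<exists>a b. \<forall>t. f (cmult br p (t *\<^sub>R y, 0)) = a * t + b" by blast
qed

lemma backward:
  fixes br :: "'a::euclidean_space \<Rightarrow> 'a \<Rightarrow> 'b::euclidean_space"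
  assumes st: "step2_carnot br" and iso: "iso_F3Rd br d"
  shows "\<exists>f :: 'a \<times> 'b \<Rightarrow> real. horiz_affine br f \<and> \<not> affine_map f"
proof -
  have bl: "bilinear br" using st unfolding step2_carnot_def by blast
  obtain th :: "'a \<Rightarrow> real^3" and l :: "nat \<Rightarrow> 'a \<Rightarrow> real" and p2 :: "'b \<Rightarrow> real^3" where
    lth: "linear th" and lp2: "linear p2"
    and bj: "bij_betw (\<lambda>x. (th x, \<lambda>i. if i < d then l i x else 0)) UNIV (F3Rd_V1 d)"
    and bp: "bij p2" and brk: "\<And>x y. p2 (br x y) = wedge3 (th x) (th y)"
    using iso unfolding iso_F3Rd_def by blast
  define g where "g a c = a$1 * c$3 - a$2 * c$2 + a$3 * c$1" for a c :: "real^3"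
  define f where "f q = g (th (fst q)) (p2 (snd q))" for q
  have ha: "horiz_affine br f"
    unfolding horiz_affine_def
  proof (intro allI)
    fix p :: "'a \<times> 'b" and y :: 'a
    obtain x z where p: "p = (x, z)" by (cases p)
    have "f (cmult br p (t *\<^sub>R y, 0))
       = (g (th y) (p2 z) + g (th x) (wedge3 (th x) (th y))) * t + g (th x) (p2 z)" for t
    proof -
      have "f (cmult br p (t *\<^sub>R y, 0)) = g (th x + t *\<^sub>R th y) (p2 z + t *\<^sub>R wedge3 (th x) (th y))"
        unfolding f_def p cmult_def
        by (simp add: bilinear_rmul[OF bl] linear_add[OF lth] linear_scale[OF lth]
            linear_add[OF lp2] linear_scale[OF lp2] brk)
      also have "\<dots> = (g (th y) (p2 z) + g (th x) (wedge3 (th x) (th y))) * t + g (th x) (p2 z)"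
        unfolding g_def wedge3_def by (simp add: algebra_simps)
      finally show ?thesis .
    qed
    then show "\<exists>a b. \<forall>t. f (cmult br p (t *\<^sub>R y, 0)) = a * t + b" by blast
  qed
  have "\<not> affine_map f"
  proof
    assume "affine_map f"
    then obtain G c where lG: "linear G" and fG: "\<And>v. f v = G v + c" unfolding affine_map_def by blast
    have key: "g (th x) (p2 z) = 0" for x z
    proof -
      have "G (x, z) = G (x, 0) + G (0, z)" using linear_add[OF lG, of "(x, 0)" "(0, z)"] by simp
      moreover have "G (0, 0) = 0" using linear_0[OF lG] by (simp add: zero_prod_def)
      ultimately have "f (x, z) - f (x, 0) - f (0, z) + f (0, 0) = 0" unfolding fG by simp
      then show ?thesis unfolding f_def g_def by (simp add: linear_0[OF lth] linear_0[OF lp2])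
    qed
    have "(vector [1, 0, 0] :: real^3, \<lambda>i::nat. 0::real) \<in> F3Rd_V1 d" unfolding F3Rd_V1_def by simp
    then obtain x where "(th x, \<lambda>i. if i < d then l i x else 0) = (vector [1, 0, 0], \<lambda>i::nat. 0::real)"
      using bj unfolding bij_betw_def by (metis (no_types, lifting) imageE)
    then have tx: "th x = vector [1, 0, 0]" by simp
    obtain z where pz: "p2 z = vector [0, 0, 1]" using bp unfolding bij_def surj_def by metis
    have "g (th x) (p2 z) = 1" unfolding tx pz g_def by simp
    with key show False by simp
  qed
  with ha show ?thesis by blast
qed

theorem proposition6p12:
  fixes br :: "'a::euclidean_space \<Rightarrow> 'a \<Rightarrow> 'b::euclidean_space"
  assumes "step2_carnot br"
    and "DIM('b) = 3"
  shows "{f :: 'a \<times> 'b \<Rightarrow> real. affine_map f} \<subset> {f. horiz_affine br f}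
     \<longleftrightarrow> (\<exists>d::nat. iso_F3Rd br d)"
proof
  assume "{f :: 'a \<times> 'b \<Rightarrow> real. affine_map f} \<subset> {f. horiz_affine br f}"
  then obtain f :: "'a \<times> 'b \<Rightarrow> real" where "horiz_affine br f" "\<not> affine_map f" by blast
  then show "\<exists>d::nat. iso_F3Rd br d" using forward[OF assms] by blast
next
  assume "\<exists>d::nat. iso_F3Rd br d"
  then obtain d where "iso_F3Rd br d" by blast
  from backward[OF assms(1) this] obtain f :: "'a \<times> 'b \<Rightarrow> real" where
    "horiz_affine br f" "\<not> affine_map f" by blast
  moreover have "{f :: 'a \<times> 'b \<Rightarrow> real. affine_map f} \<subseteq> {f. horiz_affine br f}"
    using aff_sub assms(1) unfolding step2_carnot_def by blast
  ultimately show "{f :: 'a \<times> 'b \<Rightarrow> real. affine_map f} \<subset> {f. horiz_affine br f}" by blast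
qed

end
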